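(* Let $X\in\mathcal{M}(N,P)$, let $K$ be a positive integer with $K\le\min(N,P)$, and let $L\in\mathcal{M}(P,K)$ be arbitrary. Then $$\min_{Z\in\mathcal{S}(N,K)}\|X-ZL^T\|_F^2 \;=\; d_*(X^TX,\,LL^T)^2 .$$
   Context: $\mathcal{M}(N,K)$ denotes the set of real $N\times K$ matrices and $\mathcal{S}(N,K)=\{M\in\mathcal{M}(N,K): M^TM=I_K\}$ the set of $N\times K$ matrices with orthonormal columns. $\|A\|_F^2=\sum_{i,k}a_{i,k}^2$ is the squared Frobenius norm. For positive semi-definite matrices $A,B$ of the same size, $\sqrt{A}$ denotes the unique PSD square root, and the Bures–Wasserstein distance is $$d_*(A,B):=\Big(\operatorname{tr}(A)-2\operatorname{tr}\big(\sqrt{\sqrt{A}\,B\,\sqrt{A}}\big)+\operatorname{tr}(B)\Big)^{1/2}.$$ *)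

theory Defs
  imports "HOL-Analysis.Analysis"
begin

text \<open>Matrices are HOL-Analysis matrices: an N x P real matrix is of type real^'p^'n,
  with the dimensions given by the (finite) index types.\<close>

definition frob_sq :: "real^'p^'n \<Rightarrow> real" where
  "frob_sq A = (\<Sum>i\<in>UNIV. \<Sum>k\<in>UNIV. (A $ i $ k)^2)"

definition stiefel :: "(real^'k^'n) set" where
  "stiefel = {M. transpose M ** M = mat 1}"

definition psd :: "real^'n^'n \<Rightarrow> bool" where
  "psd A \<longleftrightarrow> transpose A = A \<and> (\<forall>x. 0 \<le> x \<bullet> (A *v x))"

definition psd_sqrt :: "real^'n^'n \<Rightarrow> real^'n^'n" where
  "psd_sqrt A = (THE B. psd B \<and> B ** B = A)"

definition bures_wasserstein :: "real^'n^'n \<Rightarrow> real^'n^'n \<Rightarrow> real" where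
  "bures_wasserstein A B =
     sqrt (trace A - 2 * trace (psd_sqrt (psd_sqrt A ** B ** psd_sqrt A)) + trace B)"

end

theory Submission
  imports Defs
begin

lemma sym_inner:
  fixes A :: "real^'n^'n"
  assumes "transpose A = A"
  shows "x \<bullet> (A *v y) = (A *v x) \<bullet> y"
proof -
  have "x \<bullet> (A *v y) = (x v* A) \<bullet> y" by (simp add: dot_lmul_matrix)
  also have "x v* A = transpose A *v x" by simp
  finally show ?thesis using assms by simp
qed

lemma quad_zero:
  fixes a b :: real
  assumes "\<And>t. a * t + b * t^2 \<le> 0"
  shows "a = 0"
proof (rule ccontr)
  assume "a \<noteq> 0"
  define c where "c = 1 / (\<bar>b\<bar> + 1)"
  have c: "c > 0" "\<bar>b\<bar> * c < 1" unfolding c_def by (auto simp: field_simps)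
  have "a * (a*c) + b * (a*c)^2 \<le> 0" by (rule assms)
  hence "a^2 * c * (1 + b*c) \<le> 0" by (simp add: power2_eq_square algebra_simps)
  moreover have "1 + b*c > 0"
  proof -
    have "- b * c \<le> \<bar>b\<bar> * c" using c(1) by (intro mult_right_mono) auto
    thus ?thesis using c(2) by linarith
  qed
  moreover have "a^2 > 0" using \<open>a \<noteq> 0\<close> by simp
  ultimately have "a^2 * c * (1 + b*c) > 0" using c by simp
  thus False using \<open>a^2 * c * (1 + b*c) \<le> 0\<close> by linarith
qed

lemma eigen_exists:
  fixes A :: "real^'n^'n"
  assumes sym: "transpose A = A" and V: "subspace V" and inv: "\<And>x. x \<in> V \<Longrightarrow> A *v x \<in> V"
    and ne: "v \<in> V" "v \<noteq> 0"
  shows "\<exists>x\<in>V. norm x = 1 \<and> A *v x = (x \<bullet> (A *v x)) *\<^sub>R x"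
proof -
  define S where "S = V \<inter> sphere 0 1"
  have "compact S" unfolding S_def using closed_subspace[OF V] 
    by (metis Int_commute compact_Int_closed compact_sphere)
  moreover have "v /\<^sub>R norm v \<in> S" using ne V unfolding S_def by (simp add: subspace_scale)
  hence "S \<noteq> {}" by auto
  moreover have "continuous_on S (\<lambda>x. x \<bullet> (A *v x))" by (intro continuous_intros)
  ultimately obtain x0 where x0: "x0 \<in> S" and mx: "\<And>y. y \<in> S \<Longrightarrow> y \<bullet> (A *v y) \<le> x0 \<bullet> (A *v x0)"
    using continuous_attains_sup by metis
  define l where "l = x0 \<bullet> (A *v x0)"
  have x0V: "x0 \<in> V" and nx0: "norm x0 = 1" using x0 unfolding S_def by auto
  have x0x0: "x0 \<bullet> x0 = 1" using nx0 by (simp add: norm_eq_1)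
  have bound: "z \<bullet> (A *v z) \<le> l * (z \<bullet> z)" if "z \<in> V" for z
  proof (cases "z = 0")
    case True then show ?thesis by simp
  next
    case False
    have "z /\<^sub>R norm z \<in> S" using that False V unfolding S_def by (simp add: subspace_scale)
    hence "(z /\<^sub>R norm z) \<bullet> (A *v (z /\<^sub>R norm z)) \<le> l" using mx l_def by blast
    moreover have "(z /\<^sub>R norm z) \<bullet> (A *v (z /\<^sub>R norm z)) = (z \<bullet> (A *v z)) / (norm z)^2"
      by (simp add: matrix_vector_mult_scaleR power2_eq_square divide_inverse)
    ultimately have "(z \<bullet> (A *v z)) / (norm z)^2 \<le> l" by simp
    moreover have "(norm z)^2 = z \<bullet> z" by (simp add: power2_norm_eq_inner)
    moreover have "z \<bullet> z > 0" using False by simp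
    ultimately show ?thesis by (simp add: divide_le_eq mult.commute)
  qed
  have orth: "y \<bullet> (A *v x0) = 0" if "y \<in> V" "y \<bullet> x0 = 0" for y
  proof -
    have "(2 * (y \<bullet> (A *v x0))) * t + (y \<bullet> (A *v y) - l * (y \<bullet> y)) * t^2 \<le> 0" for t
    proof -
      have "x0 + t *\<^sub>R y \<in> V" using V x0V that(1) by (simp add: subspace_add subspace_scale)
      hence b: "(x0 + t *\<^sub>R y) \<bullet> (A *v (x0 + t *\<^sub>R y)) \<le> l * ((x0 + t *\<^sub>R y) \<bullet> (x0 + t *\<^sub>R y))"
        by (rule bound)
      have s: "x0 \<bullet> (A *v y) = y \<bullet> (A *v x0)" using sym_inner[OF sym, of x0 y] by (simp add: inner_commute)
      have "(x0 + t *\<^sub>R y) \<bullet> (A *v (x0 + t *\<^sub>R y)) = l + 2 * t * (y \<bullet> (A *v x0)) + t^2 * (y \<bullet> (A *v y))"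
        using s by (simp add: matrix_vector_right_distrib matrix_vector_mult_scaleR inner_add_left inner_add_right l_def power2_eq_square algebra_simps)
      moreover have "(x0 + t *\<^sub>R y) \<bullet> (x0 + t *\<^sub>R y) = 1 + t^2 * (y \<bullet> y)"
        using that(2) x0x0 by (simp add: inner_add_left inner_add_right inner_commute power2_eq_square algebra_simps)
      ultimately show ?thesis using b by (simp add: algebra_simps)
    qed
    hence "2 * (y \<bullet> (A *v x0)) = 0" by (rule quad_zero)
    thus ?thesis by simp
  qed
  define w where "w = A *v x0 - l *\<^sub>R x0"
  have wV: "w \<in> V" unfolding w_def using V inv x0V by (simp add: subspace_diff subspace_scale)
  have wx0: "w \<bullet> x0 = 0"
  proof -
    have "w \<bullet> x0 = (A *v x0) \<bullet> x0 - l * (x0 \<bullet> x0)" unfolding w_def by (simp add: inner_diff_left)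
    also have "\<dots> = 0" using x0x0 unfolding l_def by (simp add: inner_commute)
    finally show ?thesis .
  qed
  have "w \<bullet> w = w \<bullet> (A *v x0) - l * (w \<bullet> x0)" unfolding w_def by (simp add: inner_diff_right)
  also have "\<dots> = 0" using orth[OF wV wx0] wx0 by simp
  finally have "w = 0" by simp
  thus ?thesis using x0V nx0 unfolding w_def l_def by (intro bexI[of _ x0]) auto
qed

lemma eigen_basis_sub:
  fixes A :: "real^'n^'n"
  assumes sym: "transpose A = A"
  shows "subspace V \<Longrightarrow> (\<forall>x\<in>V. A *v x \<in> V) \<Longrightarrow> dim V = n \<Longrightarrow>
    \<exists>B. B \<subseteq> V \<and> finite B \<and> card B = n \<and> pairwise orthogonal B \<and>
        (\<forall>x\<in>B. norm x = 1 \<and> A *v x = (x \<bullet> (A *v x)) *\<^sub>R x)"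
proof (induction n arbitrary: V)
  case 0 then show ?case by (intro exI[of _ "{}"]) auto
next
  case (Suc n)
  have "\<not> V \<subseteq> {0}" using Suc.prems(3) dim_eq_0[of V] by auto
  then obtain v where v: "v \<in> V" "v \<noteq> 0" by auto
  obtain x where x: "x \<in> V" "norm x = 1" "A *v x = (x \<bullet> (A *v x)) *\<^sub>R x"
    using eigen_exists[OF sym Suc.prems(1) _ v] Suc.prems(2) by blast
  define V' where "V' = {y \<in> V. \<forall>z \<in> span {x}. orthogonal z y}"
  have V'_iff: "y \<in> V' \<longleftrightarrow> y \<in> V \<and> x \<bullet> y = 0" for y
    unfolding V'_def span_singleton orthogonal_def by (auto simp: inner_scaleR_left)
  have subV': "subspace V'"
  proof -
    have "V' = V \<inter> {y. \<forall>z \<in> span {x}. orthogonal z y}" unfolding V'_def by auto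
    thus ?thesis using Suc.prems(1) subspace_orthogonal_to_vectors subspace_inter by metis
  qed
  have "span {x} \<subseteq> V" using x(1) Suc.prems(1) by (simp add: span_minimal)
  hence "dim V' + dim (span {x}) = dim V"
    unfolding V'_def by (intro dim_subspace_orthogonal_to_vectors) (auto simp: Suc.prems(1))
  moreover have "dim (span {x}) = 1" using x(2) by auto
  ultimately have dV': "dim V' = n" using Suc.prems(3) by simp
  have invV': "\<forall>y\<in>V'. A *v y \<in> V'"
  proof
    fix y assume y: "y \<in> V'"
    have "x \<bullet> (A *v y) = (A *v x) \<bullet> y" by (rule sym_inner[OF sym])
    also have "\<dots> = 0" using y V'_iff x(3) by (metis inner_scaleR_left mult_zero_right)
    finally show "A *v y \<in> V'" using y V'_iff Suc.prems(2) by auto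
  qed
  obtain B' where B': "B' \<subseteq> V'" "finite B'" "card B' = n" "pairwise orthogonal B'"
    "\<forall>x\<in>B'. norm x = 1 \<and> A *v x = (x \<bullet> (A *v x)) *\<^sub>R x"
    using Suc.IH[OF subV' invV' dV'] by blast
  have xx: "x \<bullet> x = 1" using x(2) by (simp add: norm_eq_1)
  have orthx: "\<And>b. b \<in> B' \<Longrightarrow> x \<bullet> b = 0" using B'(1) V'_iff by blast
  hence xB': "x \<notin> B'" using xx by fastforce
  show ?case
  proof (intro exI[of _ "insert x B'"] conjI)
    show "insert x B' \<subseteq> V" using B'(1) x(1) V'_iff by auto
    show "finite (insert x B')" using B' by simp
    show "card (insert x B') = Suc n" using B' xB' by simp
    show "pairwise orthogonal (insert x B')"
      using B'(4) orthx by (auto simp: pairwise_insert orthogonal_def inner_commute)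
    show "\<forall>y\<in>insert x B'. norm y = 1 \<and> A *v y = (y \<bullet> (A *v y)) *\<^sub>R y"
      using B'(5) x by auto
  qed
qed

definition diagm :: "real^'k \<Rightarrow> real^'k^'k" where
  "diagm s = (\<chi> i j. if i = j then s $ i else 0)"

lemma spectral:
  fixes A :: "real^'n^'n"
  assumes sym: "transpose A = A"
  obtains Q d where "orthogonal_matrix Q" "A = Q ** diagm d ** transpose Q"
proof -
  obtain B where B: "finite B" "card B = CARD('n)" "pairwise orthogonal B"
        "\<forall>x\<in>B. norm x = 1 \<and> A *v x = (x \<bullet> (A *v x)) *\<^sub>R x"
    using eigen_basis_sub[OF sym, of UNIV "CARD('n)"] by auto
  then obtain f where f: "bij_betw f (UNIV::'n set) B"
    by (metis finite_class.finite_UNIV finite_same_card_bij)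
  have fB: "f i \<in> B" for i using f by (auto simp: bij_betw_def)
  have [simp]: "norm (f i) = 1" for i using B(4) fB by blast
  have [simp]: "orthogonal (f i) (f j)" if "i \<noteq> j" for i j
  proof -
    have "f i \<noteq> f j" using f that by (auto simp: bij_betw_def inj_on_def)
    thus ?thesis using B(3) fB unfolding pairwise_def by blast
  qed
  define Q where "Q = (\<chi> i j. f j $ i)"
  define d where "d = (\<chi> j. f j \<bullet> (A *v f j))"
  have oQ: "orthogonal_matrix Q"
    unfolding Q_def by (simp add: orthogonal_matrix_orthonormal_columns column_def)
  have ev: "A *v f j = (d $ j) *\<^sub>R f j" for j using B(4) fB unfolding d_def by auto
  have AQ: "A ** Q = Q ** diagm d"
  proof -
    have "(A ** Q) $ i $ j = (Q ** diagm d) $ i $ j" for i j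
    proof -
      have "(A ** Q) $ i $ j = (A *v f j) $ i"
        unfolding Q_def by (simp add: matrix_matrix_mult_def matrix_vector_mult_def)
      also have "\<dots> = d $ j * f j $ i" using ev by simp
      also have "\<dots> = (Q ** diagm d) $ i $ j"
        unfolding Q_def diagm_def by (simp add: matrix_matrix_mult_def if_distrib cong: if_cong)
      finally show ?thesis .
    qed
    thus ?thesis by (simp add: vec_eq_iff)
  qed
  have "A = A ** (Q ** transpose Q)" using oQ by (simp add: orthogonal_matrix_def)
  also have "\<dots> = Q ** diagm d ** transpose Q" by (simp add: matrix_mul_assoc AQ)
  finally show ?thesis using that oQ by blast
qed

lemma inner_mat_transpose:
  fixes M :: "real^'a^'b"
  shows "x \<bullet> (M *v y) = (transpose M *v x) \<bullet> y"
  by (simp add: dot_lmul_matrix[symmetric])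

lemma if_mult0: "(if P then a else (0::real)) * b = (if P then a * b else 0)" by simp
lemma mult_if0: "b * (if P then a else (0::real)) = (if P then b * a else 0)" by simp

lemma diagm_mult: "diagm s ** diagm t = diagm (\<chi> i. s $ i * t $ i)"
  by (simp add: diagm_def matrix_matrix_mult_def vec_eq_iff if_mult0 sum.delta)

lemma diagm_mv: "diagm s *v y = (\<chi> i. s $ i * y $ i)"
  by (simp add: diagm_def matrix_vector_mult_def vec_eq_iff if_mult0 sum.delta)

lemma transpose_diagm [simp]: "transpose (diagm s) = diagm s"
  by (simp add: diagm_def transpose_def vec_eq_iff)

lemma trace_diagm: "trace (diagm s) = (\<Sum>i\<in>UNIV. s $ i)"
  by (simp add: diagm_def trace_def)

lemma inner_diagm: "y \<bullet> (diagm s *v y) = (\<Sum>i\<in>UNIV. s $ i * (y $ i)^2)"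
  by (simp add: diagm_mv inner_vec_def power2_eq_square ac_simps)

lemma VDV_props:
  fixes V :: "real^'k^'m" and s :: "real^'k"
  assumes VV: "transpose V ** V = mat 1" and s: "\<forall>i. 0 \<le> s $ i"
  shows "psd (V ** diagm s ** transpose V)"
    and "(V ** diagm s ** transpose V) ** (V ** diagm s ** transpose V) = V ** diagm (\<chi> i. s $ i * s $ i) ** transpose V"
    and "trace (V ** diagm s ** transpose V) = (\<Sum>i\<in>UNIV. s $ i)"
proof -
  show "psd (V ** diagm s ** transpose V)"
    unfolding psd_def
  proof (intro conjI allI)
    show "transpose (V ** diagm s ** transpose V) = V ** diagm s ** transpose V"
      by (simp only: matrix_transpose_mul transpose_transpose transpose_diagm matrix_mul_assoc)
    fix x
    have "(V ** diagm s ** transpose V) *v x = V *v (diagm s *v (transpose V *v x))"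
      by (simp only: matrix_vector_mul_assoc matrix_mul_assoc)
    hence "x \<bullet> ((V ** diagm s ** transpose V) *v x) = (transpose V *v x) \<bullet> (diagm s *v (transpose V *v x))"
      using inner_mat_transpose[of x V] by simp
    also have "\<dots> \<ge> 0" unfolding inner_diagm using s by (intro sum_nonneg) auto
    finally show "0 \<le> x \<bullet> ((V ** diagm s ** transpose V) *v x)" .
  qed
  show "(V ** diagm s ** transpose V) ** (V ** diagm s ** transpose V) = V ** diagm (\<chi> i. s $ i * s $ i) ** transpose V"
  proof -
    have "(V ** diagm s ** transpose V) ** (V ** diagm s ** transpose V) =
          V ** diagm s ** (transpose V ** V) ** diagm s ** transpose V" by (simp only: matrix_mul_assoc)
    also have "\<dots> = V ** (diagm s ** diagm s) ** transpose V" by (simp only: VV matrix_mul_rid matrix_mul_assoc)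
    finally show ?thesis by (simp only: diagm_mult)
  qed
  have "trace (V ** diagm s ** transpose V) = trace (V ** (diagm s ** transpose V))"
    by (simp only: matrix_mul_assoc)
  also have "\<dots> = trace ((diagm s ** transpose V) ** V)" by (rule trace_mul_sym)
  also have "\<dots> = trace (diagm s)" by (simp only: matrix_mul_assoc[symmetric] VV matrix_mul_rid)
  finally show "trace (V ** diagm s ** transpose V) = (\<Sum>i\<in>UNIV. s $ i)" by (simp only: trace_diagm)
qed

lemma mult_col: "(M ** Q) $ i $ j = (M *v column j Q) $ i"
  by (simp add: matrix_matrix_mult_def matrix_vector_mult_def column_def)

lemma psd_sqrt_unique:
  fixes P P' :: "real^'n^'n"
  assumes P: "psd P" and P': "psd P'" and eq: "P ** P = P' ** P'"
  shows "P = P'"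
proof -
  have symP: "transpose P = P" and symP': "transpose P' = P'" using P P' by (auto simp: psd_def)
  obtain Q d where oQ: "orthogonal_matrix Q" and Pd: "P = Q ** diagm d ** transpose Q"
    using spectral[OF symP] by blast
  have QQ: "transpose Q ** Q = mat 1" "Q ** transpose Q = mat 1" using oQ by (auto simp: orthogonal_matrix_def)
  have PQ: "P ** Q = Q ** diagm d"
  proof -
    have "P ** Q = Q ** diagm d ** (transpose Q ** Q)" by (simp only: Pd matrix_mul_assoc)
    thus ?thesis by (simp only: QQ matrix_mul_rid)
  qed
  have colP: "P *v column j Q = d $ j *\<^sub>R column j Q" for j
  proof -
    have "(P *v column j Q) $ i = (d $ j *\<^sub>R column j Q) $ i" for i
    proof -
      have "(Q *v column j (diagm d)) $ i = d $ j * Q $ i $ j"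
        by (simp add: matrix_vector_mult_def column_def diagm_def mult_if0 sum.delta sum.delta')
      moreover have "(P *v column j Q) $ i = (Q *v column j (diagm d)) $ i"
        using arg_cong[OF PQ, of "\<lambda>M. M $ i $ j"] unfolding mult_col .
      ultimately show ?thesis by (simp add: column_def)
    qed
    thus ?thesis by (simp add: vec_eq_iff)
  qed
  have nq: "column j Q \<bullet> column j Q = 1" for j
    using oQ unfolding orthogonal_matrix_orthonormal_columns by (simp add: norm_eq_1)
  have colP': "P' *v column j Q = d $ j *\<^sub>R column j Q" for j
  proof -
    define v where "v = column j Q"
    define m where "m = d $ j"
    have m0: "0 \<le> m"
    proof -
      have "0 \<le> v \<bullet> (P *v v)" using P by (simp add: psd_def)
      also have "\<dots> = m" using colP nq unfolding v_def m_def by simp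
      finally show ?thesis .
    qed
    have sq: "P' *v (P' *v v) = (m * m) *\<^sub>R v"
    proof -
      have "P' *v (P' *v v) = P *v (P *v v)" by (simp add: matrix_vector_mul_assoc eq)
      also have "\<dots> = (m*m) *\<^sub>R v" using colP unfolding v_def m_def by (simp add: matrix_vector_mult_scaleR)
      finally show ?thesis .
    qed
    show ?thesis
    proof (cases "m = 0")
      case True
      have "(P' *v v) \<bullet> (P' *v v) = v \<bullet> (P' *v (P' *v v))"
        using inner_mat_transpose[of v P' "P' *v v"] symP' by (simp add: inner_commute)
      also have "\<dots> = 0" using sq True by simp
      finally have "P' *v v = 0" by simp
      thus ?thesis using True unfolding v_def m_def by simp
    next
      case False
      hence mpos: "m > 0" using m0 by simp
      define w where "w = P' *v v - m *\<^sub>R v"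
      have Pw: "P' *v w = (- m) *\<^sub>R w"
        unfolding w_def using sq by (simp add: matrix_vector_right_distrib matrix_vector_mult_scaleR
          matrix_vector_mult_diff_distrib algebra_simps)
      have "0 \<le> w \<bullet> (P' *v w)" using P' by (simp add: psd_def)
      also have "\<dots> = - m * (w \<bullet> w)" using Pw by simp
      finally have "w \<bullet> w \<le> 0" using mpos by (simp add: mult_le_0_iff)
      hence "w \<bullet> w = 0" using inner_ge_zero[of w] by linarith
      hence "w = 0" by simp
      thus ?thesis unfolding w_def v_def m_def by simp
    qed
  qed
  have P'Q: "P' ** Q = Q ** diagm d"
  proof -
    have "(P' ** Q) $ i $ j = (P ** Q) $ i $ j" for i j unfolding mult_col using colP colP' by simp
    thus ?thesis using PQ by (simp add: vec_eq_iff)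
  qed
  have "P' = P' ** (Q ** transpose Q)" using QQ by simp
  also have "\<dots> = Q ** diagm d ** transpose Q" by (simp only: matrix_mul_assoc P'Q)
  finally show ?thesis using Pd by simp
qed

lemma psd_sqrt_eq:
  assumes "psd P" "P ** P = A"
  shows "psd_sqrt A = P"
  unfolding psd_sqrt_def
  using assms psd_sqrt_unique by (intro the_equality) auto

lemma orthonormal_extend:
  fixes u :: "'k::finite \<Rightarrow> real^'m" and I :: "'k set"
  assumes card: "CARD('k) \<le> CARD('m)"
    and orth: "\<And>i j. i \<in> I \<Longrightarrow> j \<in> I \<Longrightarrow> u i \<bullet> u j = (if i = j then 1 else 0)"
  obtains g where "\<And>i. i \<in> I \<Longrightarrow> g i = u i" "\<And>i j. g i \<bullet> g j = (if i = j then 1 else 0)"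
proof -
  define S where "S = u ` I"
  have injI: "inj_on u I"
  proof
    fix i j assume ij: "i \<in> I" "j \<in> I" "u i = u j"
    hence "u i \<bullet> u j = 1" using orth[of i i] by simp
    thus "i = j" using orth[OF ij(1,2)] by (auto split: if_splits)
  qed
  have cS: "card S = card I" unfolding S_def using injI by (simp add: card_image)
  have pS: "pairwise orthogonal S"
    unfolding S_def pairwise_def orthogonal_def using orth by fastforce
  have S0: "0 \<notin> S" unfolding S_def using orth by force
  have indS: "independent S" by (rule pairwise_orthogonal_independent[OF pS S0])
  have dS: "dim (span S) = card I" using cS indS by (simp add: dim_eq_card_independent)
  define W where "W = {y \<in> UNIV. \<forall>x \<in> span S. orthogonal x y}"
  have subW: "subspace W" unfolding W_def using subspace_orthogonal_to_vectors by simp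
  have "dim W + dim (span S) = dim (UNIV :: (real^'m) set)"
    unfolding W_def by (intro dim_subspace_orthogonal_to_vectors) (auto simp: subspace_span)
  hence dW: "dim W + card I = CARD('m)" using dS by simp
  obtain Bw where Bw: "Bw \<subseteq> W" "pairwise orthogonal Bw" "\<And>x. x \<in> Bw \<Longrightarrow> norm x = 1"
      "independent Bw" "card Bw = dim W"
    using orthonormal_basis_subspace[OF subW] by metis
  have fBw: "finite Bw" using Bw(4) by (simp add: independent_imp_finite)
  have fI: "finite I" by simp
  have "card (UNIV - I) = CARD('k) - card I" using fI card_Diff_subset[of I UNIV] finite_class.finite_UNIV by simp
  also have "\<dots> \<le> card Bw" using Bw(5) dW card by linarith
  finally have "card (UNIV - I) \<le> card Bw" .
  then obtain h where h: "h ` (UNIV - I) \<subseteq> Bw" "inj_on h (UNIV - I)"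
    using card_le_inj[of "UNIV - I" Bw] fBw by auto
  define g where "g i = (if i \<in> I then u i else h i)" for i
  show ?thesis
  proof (rule that)
    show "\<And>i. i \<in> I \<Longrightarrow> g i = u i" unfolding g_def by simp
    fix i j
    have cross: "u a \<bullet> h b = 0" if "a \<in> I" "b \<notin> I" for a b
    proof -
      have "h b \<in> W" using h(1) Bw(1) that(2) by auto
      moreover have "u a \<in> span S" using that(1) unfolding S_def by (simp add: span_base)
      ultimately show ?thesis unfolding W_def orthogonal_def by auto
    qed
    show "g i \<bullet> g j = (if i = j then 1 else 0)"
    proof (cases "i \<in> I"; cases "j \<in> I")
      assume "i \<in> I" "j \<in> I" thus ?thesis unfolding g_def using orth by simp
    next
      assume "i \<in> I" "j \<notin> I" thus ?thesis unfolding g_def using cross by auto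
    next
      assume "i \<notin> I" "j \<in> I" thus ?thesis unfolding g_def using cross by (auto simp: inner_commute)
    next
      assume ij: "i \<notin> I" "j \<notin> I"
      show ?thesis
      proof (cases "i = j")
        case True
        have "norm (h i) = 1" using Bw(3) h(1) ij by auto
        thus ?thesis using True ij unfolding g_def by (simp add: norm_eq_1)
      next
        case False
        hence "h i \<noteq> h j" using h(2) ij by (auto simp: inj_on_def)
        moreover have "h i \<in> Bw" "h j \<in> Bw" using h(1) ij by auto
        ultimately have "h i \<bullet> h j = 0" using Bw(2) unfolding pairwise_def orthogonal_def by blast
        thus ?thesis using False ij unfolding g_def by simp
      qed
    qed
  qed
qed

lemma col_inner: "(transpose G ** G) $ i $ j = column i G \<bullet> column j G"
  by (simp add: matrix_mult_transpose_dot_column)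

lemma svd:
  fixes M :: "real^'k^'m"
  assumes card: "CARD('k) \<le> CARD('m)"
  obtains U Q s where "transpose U ** U = mat 1" "orthogonal_matrix Q" "\<forall>i. 0 \<le> s $ i"
    "M = U ** diagm s ** transpose Q"
proof -
  have symM: "transpose (transpose M ** M) = transpose M ** M"
    by (simp add: matrix_transpose_mul)
  obtain Q d where oQ: "orthogonal_matrix Q" and Md: "transpose M ** M = Q ** diagm d ** transpose Q"
    using spectral[OF symM] by blast
  have QQ: "transpose Q ** Q = mat 1" "Q ** transpose Q = mat 1" using oQ by (auto simp: orthogonal_matrix_def)
  define G where "G = M ** Q"
  have GG: "transpose G ** G = diagm d"
  proof -
    have "transpose G ** G = transpose Q ** (transpose M ** M) ** Q"
      unfolding G_def by (simp only: matrix_transpose_mul matrix_mul_assoc)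
    also have "\<dots> = (transpose Q ** Q) ** diagm d ** (transpose Q ** Q)"
      by (simp only: Md matrix_mul_assoc)
    finally show ?thesis by (simp only: QQ matrix_mul_lid matrix_mul_rid)
  qed
  have cG: "column i G \<bullet> column j G = (if i = j then d $ i else 0)" for i j
    using arg_cong[OF GG, of "\<lambda>A. A $ i $ j"] by (simp add: col_inner diagm_def)
  have d0: "0 \<le> d $ i" for i using cG[of i i] by (metis inner_ge_zero)
  define s where "s = (\<chi> i. sqrt (d $ i))"
  have s0: "\<forall>i. 0 \<le> s $ i" unfolding s_def using d0 by simp
  have ss: "s $ i * s $ i = d $ i" for i unfolding s_def using d0 by simp
  define I where "I = {i. s $ i > 0}"
  define u where "u i = (1 / s $ i) *\<^sub>R column i G" for i
  have uo: "u i \<bullet> u j = (if i = j then 1 else 0)" if "i \<in> I" "j \<in> I" for i j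
  proof (cases "i = j")
    case True
    have "s $ i > 0" using that I_def by simp
    thus ?thesis using True cG[of i i] ss[of i] unfolding u_def by (simp add: field_simps) (metis mult_pos_pos less_irrefl)
  next
    case False thus ?thesis using cG[of i j] unfolding u_def by simp
  qed
  obtain g where g: "\<And>i. i \<in> I \<Longrightarrow> g i = u i" "\<And>i j. g i \<bullet> g j = (if i = j then 1 else 0)"
    using orthonormal_extend[OF card uo] by metis
  define U where "U = (\<chi> a b. g b $ a)"
  have cU: "column b U = g b" for b unfolding U_def column_def by (simp add: vec_eq_iff)
  have UU: "transpose U ** U = mat 1"
    by (simp add: matrix_mult_transpose_dot_column cU g(2) mat_def vec_eq_iff)
  have colG: "column j G = s $ j *\<^sub>R g j" for j
  proof (cases "j \<in> I")
    case True
    hence "s $ j > 0" unfolding I_def by simp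
    thus ?thesis using g(1)[OF True] unfolding u_def by simp
  next
    case False
    hence sj: "s $ j = 0" using s0 unfolding I_def by (simp add: not_less) (metis antisym)
    have "column j G \<bullet> column j G = 0" using cG[of j j] ss[of j] sj by simp
    hence "column j G = 0" by simp
    thus ?thesis using sj by simp
  qed
  have GU: "G = U ** diagm s"
  proof -
    have "G $ a $ j = (U ** diagm s) $ a $ j" for a j
    proof -
      have "(U ** diagm s) $ a $ j = g j $ a * s $ j"
        unfolding U_def diagm_def by (simp add: matrix_matrix_mult_def mult_if0 sum.delta sum.delta')
      moreover have "G $ a $ j = column j G $ a" by (simp add: column_def)
      ultimately show ?thesis using colG[of j] by simp
    qed
    thus ?thesis by (simp add: vec_eq_iff)
  qed
  have "M = M ** (Q ** transpose Q)" using QQ by simp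
  also have "\<dots> = U ** diagm s ** transpose Q" by (simp only: matrix_mul_assoc G_def[symmetric] GU)
  finally show ?thesis using that UU oQ s0 by blast
qed

lemma transpose_diff: "transpose (A - B) = transpose A - transpose (B :: real^'a^'b)"
  by (simp add: transpose_def vec_eq_iff)

lemma mult_diff_l: "(A :: real^'b^'a) ** (B - C) = A ** B - A ** C"
  by (simp add: matrix_matrix_mult_def vec_eq_iff sum_subtractf right_diff_distrib)

lemma mult_diff_r: "((A :: real^'b^'a) - B) ** C = A ** C - B ** C"
  by (simp add: matrix_matrix_mult_def vec_eq_iff sum_subtractf left_diff_distrib)

lemma trace_transpose: "trace (transpose A) = trace (A :: real^'n^'n)"
  by (simp add: trace_def transpose_def)

lemma frob_trace: "frob_sq F = trace (transpose F ** F)"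
proof -
  have "trace (transpose F ** F) = (\<Sum>k\<in>UNIV. \<Sum>i\<in>UNIV. F $ i $ k * F $ i $ k)"
    unfolding trace_def by (simp add: matrix_matrix_mult_def transpose_def)
  also have "\<dots> = (\<Sum>i\<in>UNIV. \<Sum>k\<in>UNIV. F $ i $ k * F $ i $ k)" by (rule sum.swap)
  also have "\<dots> = frob_sq F" unfolding frob_sq_def by (simp add: power2_eq_square)
  finally show ?thesis by simp
qed

lemma frob_nonneg: "0 \<le> frob_sq F"
  unfolding frob_sq_def by (intro sum_nonneg) auto

lemma frob_expand:
  fixes X :: "real^'p^'n" and L :: "real^'k^'p" and Z :: "real^'k^'n"
  assumes ZZ: "transpose Z ** Z = mat 1"
  shows "frob_sq (X - Z ** transpose L) =
     trace (transpose X ** X) - 2 * trace (transpose Z ** (X ** L)) + trace (L ** transpose L)"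
proof -
  have t2: "trace (transpose X ** (Z ** transpose L)) = trace (transpose Z ** (X ** L))"
  proof -
    have "trace (transpose X ** (Z ** transpose L)) = trace ((transpose X ** Z) ** transpose L)"
      by (simp only: matrix_mul_assoc)
    also have "\<dots> = trace (transpose L ** (transpose X ** Z))" by (rule trace_mul_sym)
    also have "\<dots> = trace (transpose (transpose L ** (transpose X ** Z)))" by (rule trace_transpose[symmetric])
    also have "\<dots> = trace (transpose Z ** (X ** L))" by (simp only: matrix_transpose_mul transpose_transpose matrix_mul_assoc)
    finally show ?thesis .
  qed
  have t3: "trace (L ** transpose Z ** X) = trace (transpose Z ** (X ** L))"
  proof -
    have "trace (L ** transpose Z ** X) = trace (L ** (transpose Z ** X))" by (simp only: matrix_mul_assoc)
    also have "\<dots> = trace ((transpose Z ** X) ** L)" by (rule trace_mul_sym)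
    finally show ?thesis by (simp only: matrix_mul_assoc)
  qed
  have t4: "L ** transpose Z ** (Z ** transpose L) = L ** transpose L"
  proof -
    have "L ** transpose Z ** (Z ** transpose L) = L ** (transpose Z ** Z) ** transpose L"
      by (simp only: matrix_mul_assoc)
    thus ?thesis by (simp only: ZZ matrix_mul_rid)
  qed
  have "transpose (X - Z ** transpose L) ** (X - Z ** transpose L) =
        transpose X ** X - L ** transpose Z ** X - (transpose X ** (Z ** transpose L) - L ** transpose Z ** (Z ** transpose L))"
    by (simp only: transpose_diff matrix_transpose_mul transpose_transpose mult_diff_l mult_diff_r)
  hence "frob_sq (X - Z ** transpose L) = trace (transpose X ** X) - trace (L ** transpose Z ** X)
      - (trace (transpose X ** (Z ** transpose L)) - trace (L ** transpose Z ** (Z ** transpose L)))"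
    by (simp only: frob_trace trace_sub)
  thus ?thesis using t2 t3 t4 by simp
qed

lemma nuc_traces:
  fixes M :: "real^'k^'m"
  assumes UU: "transpose U ** U = mat 1" and oQ: "orthogonal_matrix Q" and s0: "\<forall>i. 0 \<le> s $ i"
    and M: "M = U ** diagm s ** transpose Q"
  shows "trace (psd_sqrt (transpose M ** M)) = (\<Sum>i\<in>UNIV. s $ i)"
    and "trace (psd_sqrt (M ** transpose M)) = (\<Sum>i\<in>UNIV. s $ i)"
proof -
  have QQ: "transpose Q ** Q = mat 1" "Q ** transpose Q = mat 1" using oQ by (auto simp: orthogonal_matrix_def)
  have tM: "transpose M = Q ** diagm s ** transpose U"
    unfolding M by (simp only: matrix_transpose_mul transpose_transpose transpose_diagm matrix_mul_assoc)
  have "transpose M ** M = Q ** diagm s ** (transpose U ** U) ** diagm s ** transpose Q"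
    unfolding tM by (simp only: M matrix_mul_assoc)
  also have "\<dots> = Q ** (diagm s ** diagm s) ** transpose Q" by (simp only: UU matrix_mul_rid matrix_mul_assoc)
  finally have MM1: "transpose M ** M = Q ** diagm (\<chi> i. s $ i * s $ i) ** transpose Q" by (simp only: diagm_mult)
  have "M ** transpose M = U ** diagm s ** (transpose Q ** Q) ** diagm s ** transpose U"
    unfolding tM by (simp only: M matrix_mul_assoc)
  also have "\<dots> = U ** (diagm s ** diagm s) ** transpose U" by (simp only: QQ matrix_mul_rid matrix_mul_assoc)
  finally have MM2: "M ** transpose M = U ** diagm (\<chi> i. s $ i * s $ i) ** transpose U" by (simp only: diagm_mult)
  have "psd_sqrt (transpose M ** M) = Q ** diagm s ** transpose Q"
    unfolding MM1 using VDV_props[OF QQ(1) s0] by (intro psd_sqrt_eq) auto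
  thus "trace (psd_sqrt (transpose M ** M)) = (\<Sum>i\<in>UNIV. s $ i)" using VDV_props(3)[OF QQ(1) s0] by simp
  have "psd_sqrt (M ** transpose M) = U ** diagm s ** transpose U"
    unfolding MM2 using VDV_props[OF UU s0] by (intro psd_sqrt_eq) auto
  thus "trace (psd_sqrt (M ** transpose M)) = (\<Sum>i\<in>UNIV. s $ i)" using VDV_props(3)[OF UU s0] by simp
qed

lemma diag_le1:
  fixes W U :: "real^'k^'n"
  assumes WW: "transpose W ** W = mat 1" and UU: "transpose U ** U = mat 1"
  shows "(transpose W ** U) $ i $ i \<le> 1"
proof -
  have "(transpose W ** U) $ i $ i = column i W \<bullet> column i U"
    by (simp add: matrix_matrix_mult_def transpose_def column_def inner_vec_def)
  also have "\<dots> \<le> norm (column i W) * norm (column i U)" by (rule norm_cauchy_schwarz)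
  also have "norm (column i W) = 1" using arg_cong[OF WW, of "\<lambda>A. A $ i $ i"]
    by (simp add: col_inner mat_def norm_eq_1)
  also have "norm (column i U) = 1" using arg_cong[OF UU, of "\<lambda>A. A $ i $ i"]
    by (simp add: col_inner mat_def norm_eq_1)
  finally show ?thesis by simp
qed

lemma trace_bound:
  fixes C :: "real^'k^'n"
  assumes UU: "transpose U ** U = mat 1" and oQ: "orthogonal_matrix Q" and s0: "\<forall>i. 0 \<le> s $ i"
    and C: "C = U ** diagm s ** transpose Q"
  shows "\<And>Z. transpose Z ** Z = mat 1 \<Longrightarrow> trace (transpose Z ** C) \<le> (\<Sum>i\<in>UNIV. s $ i)"
    and "transpose (U ** transpose Q) ** (U ** transpose Q) = mat 1"
    and "trace (transpose (U ** transpose Q) ** C) = (\<Sum>i\<in>UNIV. s $ i)"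
proof -
  have QQ: "transpose Q ** Q = mat 1" "Q ** transpose Q = mat 1" using oQ by (auto simp: orthogonal_matrix_def)
  fix Z :: "real^'k^'n" assume ZZ: "transpose Z ** Z = mat 1"
  define W where "W = Z ** Q"
  have WW: "transpose W ** W = mat 1"
  proof -
    have "transpose W ** W = transpose Q ** (transpose Z ** Z) ** Q"
      unfolding W_def by (simp only: matrix_transpose_mul matrix_mul_assoc)
    thus ?thesis by (simp only: ZZ QQ matrix_mul_rid)
  qed
  have "trace (transpose Z ** C) = trace ((transpose Z ** U ** diagm s) ** transpose Q)"
    unfolding C by (simp only: matrix_mul_assoc)
  also have "\<dots> = trace (transpose Q ** (transpose Z ** U ** diagm s))" by (rule trace_mul_sym)
  also have "\<dots> = trace (transpose W ** U ** diagm s)"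
    unfolding W_def by (simp only: matrix_transpose_mul matrix_mul_assoc)
  also have "\<dots> = (\<Sum>i\<in>UNIV. (transpose W ** U) $ i $ i * s $ i)"
    by (simp add: trace_def matrix_matrix_mult_def diagm_def mult_if0 sum.delta sum.delta')
  also have "\<dots> \<le> (\<Sum>i\<in>UNIV. s $ i)"
  proof (rule sum_mono)
    fix i
    have "(transpose W ** U) $ i $ i * s $ i \<le> 1 * s $ i"
      using diag_le1[OF WW UU, of i] s0 by (intro mult_right_mono) auto
    thus "(transpose W ** U) $ i $ i * s $ i \<le> s $ i" by simp
  qed
  finally show "trace (transpose Z ** C) \<le> (\<Sum>i\<in>UNIV. s $ i)" .
next
  have QQ: "transpose Q ** Q = mat 1" "Q ** transpose Q = mat 1" using oQ by (auto simp: orthogonal_matrix_def)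
  have "transpose (U ** transpose Q) ** (U ** transpose Q) = Q ** (transpose U ** U) ** transpose Q"
    by (simp only: matrix_transpose_mul transpose_transpose matrix_mul_assoc)
  thus "transpose (U ** transpose Q) ** (U ** transpose Q) = mat 1" by (simp only: UU QQ matrix_mul_rid)
  have "transpose (U ** transpose Q) ** C = Q ** (transpose U ** U) ** diagm s ** transpose Q"
    unfolding C by (simp only: matrix_transpose_mul transpose_transpose matrix_mul_assoc)
  also have "\<dots> = Q ** diagm s ** transpose Q" by (simp only: UU matrix_mul_rid)
  finally show "trace (transpose (U ** transpose Q) ** C) = (\<Sum>i\<in>UNIV. s $ i)"
    using VDV_props(3)[OF QQ(1) s0] by simp
qed

theorem lemma1:
  fixes X :: "real^'p^'n" and L :: "real^'k^'p"
  assumes "CARD('k) \<le> CARD('n)" and "CARD('k) \<le> CARD('p)"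
  shows "(\<exists>Z\<in>(stiefel :: (real^'k^'n) set).
            frob_sq (X - Z ** transpose L) = (bures_wasserstein (transpose X ** X) (L ** transpose L))^2)
       \<and> (\<forall>Z\<in>(stiefel :: (real^'k^'n) set).
            (bures_wasserstein (transpose X ** X) (L ** transpose L))^2 \<le> frob_sq (X - Z ** transpose L))"
proof -
  define A where "A = transpose X ** X"
  define B where "B = L ** transpose L"
  define C where "C = X ** L"
  have symA: "transpose A = A" unfolding A_def by (simp add: matrix_transpose_mul)
  obtain Q1 d where oQ1: "orthogonal_matrix Q1" and Ad: "A = Q1 ** diagm d ** transpose Q1"
    using spectral[OF symA] by blast
  have QQ1: "transpose Q1 ** Q1 = mat 1" "Q1 ** transpose Q1 = mat 1"
    using oQ1 by (auto simp: orthogonal_matrix_def)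
  define G where "G = X ** Q1"
  have GG: "transpose G ** G = diagm d"
  proof -
    have "transpose G ** G = transpose Q1 ** A ** Q1"
      unfolding G_def A_def by (simp only: matrix_transpose_mul matrix_mul_assoc)
    also have "\<dots> = (transpose Q1 ** Q1) ** diagm d ** (transpose Q1 ** Q1)"
      by (simp only: Ad matrix_mul_assoc)
    finally show ?thesis by (simp only: QQ1 matrix_mul_lid matrix_mul_rid)
  qed
  have d0: "0 \<le> d $ i" for i
  proof -
    have "d $ i = column i G \<bullet> column i G"
      using arg_cong[OF GG, of "\<lambda>A. A $ i $ i"] by (simp add: col_inner diagm_def)
    thus ?thesis by simp
  qed
  define r where "r = (\<chi> i. sqrt (d $ i))"
  have r0: "\<forall>i. 0 \<le> r $ i" unfolding r_def using d0 by simp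
  have rr: "(\<chi> i. r $ i * r $ i) = d" unfolding r_def using d0 by (simp add: vec_eq_iff)
  define R where "R = Q1 ** diagm r ** transpose Q1"
  have psdR: "psd R" unfolding R_def by (rule VDV_props(1)[OF QQ1(1) r0])
  have RR: "R ** R = A" unfolding R_def Ad using VDV_props(2)[OF QQ1(1) r0] rr by simp
  have sqA: "psd_sqrt A = R" by (rule psd_sqrt_eq[OF psdR RR])
  have symR: "transpose R = R" using psdR by (simp add: psd_def)
  define M where "M = R ** L"
  have RBR: "R ** B ** R = M ** transpose M"
    unfolding M_def B_def by (simp only: matrix_transpose_mul symR matrix_mul_assoc)
  have MtM: "transpose M ** M = transpose C ** C"
  proof -
    have "transpose M ** M = transpose L ** (R ** R) ** L"
      unfolding M_def by (simp only: matrix_transpose_mul symR matrix_mul_assoc)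
    also have "\<dots> = transpose C ** C"
      unfolding RR A_def C_def by (simp only: matrix_transpose_mul matrix_mul_assoc)
    finally show ?thesis .
  qed
  obtain UM QM sM where svdM: "transpose UM ** UM = mat 1" "orthogonal_matrix QM" "\<forall>i. 0 \<le> sM $ i"
    "M = UM ** diagm sM ** transpose QM"
    using svd[OF assms(2), of M] by blast
  obtain UC QC sC where svdC: "transpose UC ** UC = mat 1" "orthogonal_matrix QC" "\<forall>i. 0 \<le> sC $ i"
    "C = UC ** diagm sC ** transpose QC"
    using svd[OF assms(1), of C] by blast
  define \<nu> where "\<nu> = (\<Sum>i\<in>UNIV. sC $ i)"
  have nu: "trace (psd_sqrt (R ** B ** R)) = \<nu>"
  proof -
    have "trace (psd_sqrt (R ** B ** R)) = trace (psd_sqrt (transpose M ** M))"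
      using nuc_traces[OF svdM] RBR by simp
    also have "\<dots> = \<nu>" unfolding MtM \<nu>_def using nuc_traces(1)[OF svdC] .
    finally show ?thesis .
  qed
  define E where "E = trace A - 2 * \<nu> + trace B"
  have frobZ: "frob_sq (X - Z ** transpose L) = trace A - 2 * trace (transpose Z ** C) + trace B"
    if "Z \<in> (stiefel :: (real^'k^'n) set)" for Z
    using frob_expand[of Z X L] that unfolding stiefel_def A_def B_def C_def by simp
  define Z0 where "Z0 = UC ** transpose QC"
  have Z0s: "Z0 \<in> (stiefel :: (real^'k^'n) set)"
    unfolding stiefel_def Z0_def using trace_bound(2)[OF svdC] by simp
  have fZ0: "frob_sq (X - Z0 ** transpose L) = E"
    using frobZ[OF Z0s] trace_bound(3)[OF svdC] unfolding E_def \<nu>_def Z0_def by simp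
  have E0: "0 \<le> E" using fZ0 frob_nonneg by metis
  have bw: "(bures_wasserstein (transpose X ** X) (L ** transpose L))^2 = E"
    unfolding bures_wasserstein_def A_def[symmetric] B_def[symmetric] sqA nu E_def[symmetric]
    using E0 by simp
  show ?thesis
  proof (intro conjI bexI[of _ Z0] ballI)
    show "Z0 \<in> stiefel" by (rule Z0s)
    show "frob_sq (X - Z0 ** transpose L) = (bures_wasserstein (transpose X ** X) (L ** transpose L))^2"
      using fZ0 bw by simp
    fix Z :: "real^'k^'n" assume Z: "Z \<in> stiefel"
    have "trace (transpose Z ** C) \<le> \<nu>"
      using trace_bound(1)[OF svdC] Z unfolding stiefel_def \<nu>_def by simp
    thus "(bures_wasserstein (transpose X ** X) (L ** transpose L))^2 \<le> frob_sq (X - Z ** transpose L)"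
      using frobZ[OF Z] bw unfolding E_def by simp
  qed
qed

end
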